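(* The poset $(P;\leq)$ defined below is not representable.
   Context: Let $P=\{p\}\cup\{p_{i_0,\ldots,i_n}: 0\le n<\omega,\ i_0,\ldots,i_n\in\omega\}$ (all these symbols distinct). Let $\le$ be the reflexive–transitive closure of the following strict relations: (0) for all $0\le j<i<\omega$: $p<p_i<p_j$; (E) for all $r\ge 0$, all $i_0,\ldots,i_{2r}\in\omega$, all $k\le i_{2r}$ and all $i<j<\omega$: $p_{i_0,\ldots,i_{2r},i}<p_{i_0,\ldots,i_{2r},j}<p_{i_0,\ldots,i_{2r-1},k}$ (for $r=0$ the last element is $p_k$); (O) for all $r\ge0$, all $i_0,\ldots,i_{2r+1}\in\omega$, all $k\le i_{2r+1}$ and all $j<i<\omega$: $p_{i_0,\ldots,i_{2r},k}<p_{i_0,\ldots,i_{2r+1},i}<p_{i_0,\ldots,i_{2r+1},j}$. This $\le$ is a partial order. A poset is representable if it is order-isomorphic to the poset of prime ideals (ordered by inclusion) of a bounded distributive lattice, equivalently iff there is a topology $\tau$ on it which is compact and such that whenever $x\not\ge y$ there is a clopen down-set containing $x$ but not $y$. *)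

theory Defs
  imports Main
begin

text \<open>Encoding of the poset P: the element p is the empty list [],
  and p_{i_0,...,i_n} is the list [i_0,...,i_n].\<close>

definition P_gen :: "nat list \<Rightarrow> nat list \<Rightarrow> bool" where
  "P_gen x y \<longleftrightarrow>
     \<comment> \<open>(0): for j < i, p < p_i < p_j\<close>
     (\<exists>i j. j < i \<and> ((x = [] \<and> y = [i]) \<or> (x = [i] \<and> y = [j])))
   \<or> \<comment> \<open>(E): s = [i_0..i_{2r}] (odd length), k \<le> i_{2r}, i < j:
          p_{s,i} < p_{s,j} < p_{i_0..i_{2r-1},k}\<close>
     (\<exists>s i j k. odd (length s) \<and> k \<le> last s \<and> i < j \<and>
        ((x = s @ [i] \<and> y = s @ [j]) \<or> (x = s @ [j] \<and> y = butlast s @ [k])))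
   \<or> \<comment> \<open>(O): s = [i_0..i_{2r+1}] (even positive length), k \<le> i_{2r+1}, j < i:
          p_{i_0..i_{2r},k} < p_{s,i} < p_{s,j}\<close>
     (\<exists>s i j k. even (length s) \<and> s \<noteq> [] \<and> k \<le> last s \<and> j < i \<and>
        ((x = butlast s @ [k] \<and> y = s @ [i]) \<or> (x = s @ [i] \<and> y = s @ [j])))"

definition P_le :: "nat list \<Rightarrow> nat list \<Rightarrow> bool" where
  "P_le = P_gen\<^sup>*\<^sup>*"

definition prime_ideal :: "'a::{bounded_lattice,distrib_lattice} set \<Rightarrow> bool" where
  "prime_ideal I \<longleftrightarrow>
     bot \<in> I \<and> I \<noteq> UNIV \<and>
     (\<forall>x y. x \<in> I \<longrightarrow> y \<le> x \<longrightarrow> y \<in> I) \<and>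
     (\<forall>x y. x \<in> I \<longrightarrow> y \<in> I \<longrightarrow> sup x y \<in> I) \<and>
     (\<forall>x y. inf x y \<in> I \<longrightarrow> x \<in> I \<or> y \<in> I)"

definition iso_to_spectrum ::
  "'p set \<Rightarrow> ('p \<Rightarrow> 'p \<Rightarrow> bool) \<Rightarrow> ('p \<Rightarrow> 'l::{bounded_lattice,distrib_lattice} set) \<Rightarrow> bool" where
  "iso_to_spectrum A le f \<longleftrightarrow>
     bij_betw f A {I. prime_ideal I} \<and>
     (\<forall>x\<in>A. \<forall>y\<in>A. le x y \<longleftrightarrow> f x \<subseteq> f y)"

text \<open>Representable: order-isomorphic to the prime spectrum of some bounded
  distributive lattice.  Since HOL cannot quantify existentially over types,
  non-representability is stated as: for every bounded distributive lattice type 'l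
  and every map f, f is not such an isomorphism.\<close>

end

theory Submission
  imports Defs "HOL-Library.Countable"
begin

definition is_ideal :: "'a::{bounded_lattice,distrib_lattice} set \<Rightarrow> bool" where
 "is_ideal K \<longleftrightarrow> bot \<in> K \<and> (\<forall>x y. x \<in> K \<longrightarrow> y \<le> x \<longrightarrow> y \<in> K) \<and> (\<forall>x y. x \<in> K \<longrightarrow> y \<in> K \<longrightarrow> sup x y \<in> K)"

lemma bpi:
  fixes J F :: "'a::{bounded_lattice,distrib_lattice} set"
  assumes J: "is_ideal J" and Ft: "top \<in> F" and Fup: "\<forall>x y. x \<in> F \<longrightarrow> x \<le> y \<longrightarrow> y \<in> F"
    and Finf: "\<forall>x y. x \<in> F \<longrightarrow> y \<in> F \<longrightarrow> inf x y \<in> F" and disj: "J \<inter> F = {}"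
  shows "\<exists>I. prime_ideal I \<and> J \<subseteq> I \<and> I \<inter> F = {}"
proof -
  define S where "S = {K. is_ideal K \<and> J \<subseteq> K \<and> K \<inter> F = {}}"
  have "\<forall>C\<in>chains S. \<exists>U\<in>S. \<forall>X\<in>C. X \<subseteq> U"
  proof
    fix C assume C: "C \<in> chains S"
    show "\<exists>U\<in>S. \<forall>X\<in>C. X \<subseteq> U"
    proof (cases "C = {}")
      case True then show ?thesis using J disj by (auto simp: S_def)
    next
      case False
      have CS: "C \<subseteq> S" and ch: "\<forall>X\<in>C. \<forall>Y\<in>C. X \<subseteq> Y \<or> Y \<subseteq> X"
        using C by (auto simp: chains_def chain_subset_def)
      have "is_ideal (\<Union>C)"
        unfolding is_ideal_def
      proof (intro conjI allI impI)
        show "bot \<in> \<Union>C" using False CS by (auto simp: S_def is_ideal_def)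
      next
        fix x y assume "x \<in> \<Union>C" "y \<le> x"
        then obtain X where "X \<in> C" "x \<in> X" by auto
        then have "y \<in> X" using CS \<open>y \<le> x\<close> by (auto simp: S_def is_ideal_def)
        then show "y \<in> \<Union>C" using \<open>X \<in> C\<close> by blast
      next
        fix x y assume "x \<in> \<Union>C" "y \<in> \<Union>C"
        then obtain X Y where XY: "X \<in> C" "Y \<in> C" "x \<in> X" "y \<in> Y" by auto
        show "sup x y \<in> \<Union>C"
        proof (cases "X \<subseteq> Y")
          case True
          have "is_ideal Y" using CS XY by (auto simp: S_def)
          then have "sup x y \<in> Y" using True XY unfolding is_ideal_def by blast
          then show ?thesis using XY by blast
        next
          case False then have "Y \<subseteq> X" using ch XY by blast
          have "is_ideal X" using CS XY by (auto simp: S_def)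
          then have "sup x y \<in> X" using \<open>Y \<subseteq> X\<close> XY unfolding is_ideal_def by blast
          then show ?thesis using XY by blast
        qed
      qed
      moreover have "J \<subseteq> \<Union>C" using False CS by (auto simp: S_def)
      moreover have "\<Union>C \<inter> F = {}" using CS by (auto simp: S_def)
      ultimately show ?thesis by (auto simp: S_def)
    qed
  qed
  then obtain M where MS: "M \<in> S" and Mmax: "\<forall>X\<in>S. M \<subseteq> X \<longrightarrow> X = M"
    using Zorn_Lemma2 by blast
  have Mi: "is_ideal M" and JM: "J \<subseteq> M" and MF: "M \<inter> F = {}" using MS by (auto simp: S_def)
  have key: "\<exists>m\<in>M. sup m z \<in> F" if z: "z \<notin> M" for z
  proof -
    define Mz where "Mz = {c. \<exists>m\<in>M. c \<le> sup m z}"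
    have "is_ideal Mz" unfolding is_ideal_def Mz_def
    proof (intro conjI allI impI)
      show "bot \<in> {c. \<exists>m\<in>M. c \<le> sup m z}" using Mi by (auto simp: is_ideal_def)
    next
      fix x y assume "x \<in> {c. \<exists>m\<in>M. c \<le> sup m z}" "y \<le> x"
      then show "y \<in> {c. \<exists>m\<in>M. c \<le> sup m z}" using order_trans by blast
    next
      fix x y assume "x \<in> {c. \<exists>m\<in>M. c \<le> sup m z}" "y \<in> {c. \<exists>m\<in>M. c \<le> sup m z}"
      then obtain m1 m2 where "m1 \<in> M" "m2 \<in> M" "x \<le> sup m1 z" "y \<le> sup m2 z" by auto
      moreover have "sup m1 m2 \<in> M" using Mi \<open>m1 \<in> M\<close> \<open>m2 \<in> M\<close> by (auto simp: is_ideal_def)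
      moreover have "sup x y \<le> sup (sup m1 m2) z" using calculation
        by (meson le_sup_iff sup_ge1 sup_ge2 order_trans)
      ultimately show "sup x y \<in> {c. \<exists>m\<in>M. c \<le> sup m z}" by blast
    qed
    moreover have "M \<subseteq> Mz" unfolding Mz_def using sup_ge1 by blast
    moreover have "z \<in> Mz"
    proof -
      have "bot \<in> M" using Mi by (simp add: is_ideal_def)
      then show ?thesis unfolding Mz_def using sup_ge2 by blast
    qed
    ultimately have "Mz \<notin> S"
    proof (intro notI)
      assume "Mz \<in> S" "M \<subseteq> Mz" "z \<in> Mz"
      then have "Mz = M" using Mmax by blast
      then show False using z \<open>z \<in> Mz\<close> by simp
    qed
    then have "Mz \<inter> F \<noteq> {}" using \<open>is_ideal Mz\<close> JM \<open>M \<subseteq> Mz\<close> by (auto simp: S_def)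
    then obtain c m where "m \<in> M" "c \<le> sup m z" "c \<in> F" unfolding Mz_def by auto
    then have "sup m z \<in> F" using Fup by blast
    then show ?thesis using \<open>m \<in> M\<close> by blast
  qed
  have "prime_ideal M"
    unfolding prime_ideal_def
  proof (intro conjI allI impI)
    show "bot \<in> M" using Mi by (simp add: is_ideal_def)
    show "M \<noteq> UNIV" using MF Ft by auto
  next
    fix x y assume "x \<in> M" "y \<le> x" then show "y \<in> M" using Mi by (simp add: is_ideal_def)
  next
    fix x y assume "x \<in> M" "y \<in> M" then show "sup x y \<in> M" using Mi by (simp add: is_ideal_def)
  next
    fix x y assume xy: "inf x y \<in> M"
    show "x \<in> M \<or> y \<in> M"
    proof (rule ccontr)
      assume "\<not> (x \<in> M \<or> y \<in> M)"
      then obtain m1 m2 where m: "m1 \<in> M" "m2 \<in> M" "sup m1 x \<in> F" "sup m2 y \<in> F"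
        using key by blast
      have inF: "inf (sup m1 x) (sup m2 y) \<in> F" using Finf m by blast
      have "inf (sup m1 x) (sup m2 y) \<le> inf (sup (sup m1 m2) x) (sup (sup m1 m2) y)"
        by (meson inf_mono le_sup_iff order_refl sup_ge1 sup_ge2)
      also have "\<dots> = sup (sup m1 m2) (inf x y)" by (simp add: sup_inf_distrib1)
      finally have le: "inf (sup m1 x) (sup m2 y) \<le> sup (sup m1 m2) (inf x y)" .
      have "sup (sup m1 m2) (inf x y) \<in> M" using Mi m xy by (simp add: is_ideal_def)
      then have "inf (sup m1 x) (sup m2 y) \<in> M" using Mi le by (simp add: is_ideal_def)
      then show False using inF MF by blast
    qed
  qed
  then show ?thesis using JM MF by blast
qed

lemma pi_bot: "prime_ideal I \<Longrightarrow> bot \<in> I" by (simp add: prime_ideal_def)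
lemma pi_ne: "prime_ideal I \<Longrightarrow> I \<noteq> UNIV" by (simp add: prime_ideal_def)
lemma pi_down: "prime_ideal I \<Longrightarrow> x \<in> I \<Longrightarrow> y \<le> x \<Longrightarrow> y \<in> I" by (simp add: prime_ideal_def)
lemma pi_sup: "prime_ideal I \<Longrightarrow> x \<in> I \<Longrightarrow> y \<in> I \<Longrightarrow> sup x y \<in> I" by (simp add: prime_ideal_def)
lemma pi_prime: "prime_ideal I \<Longrightarrow> inf x y \<in> I \<Longrightarrow> x \<in> I \<or> y \<in> I" by (simp add: prime_ideal_def)

lemma prime_top: "prime_ideal I \<Longrightarrow> top \<notin> I"
proof
  assume a: "prime_ideal I" "top \<in> I"
  then have "y \<in> I" for y using pi_down top_greatest by metis
  then have "I = UNIV" by auto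
  then show False using pi_ne a by blast
qed
lemma dec_chain_prime:
  fixes g :: "nat \<Rightarrow> 'l::{bounded_lattice,distrib_lattice} set"
  assumes P: "\<And>l. prime_ideal (g l)" and M: "\<And>i j. i \<le> j \<Longrightarrow> g j \<subseteq> g i"
  shows "prime_ideal (\<Inter>l. g l)"
  unfolding prime_ideal_def
proof (intro conjI allI impI)
  show "bot \<in> (\<Inter>l. g l)" using P pi_bot by blast
  have "top \<notin> g 0" using prime_top P by blast
  then show "(\<Inter>l. g l) \<noteq> UNIV" by blast
next
  fix x y assume xI: "x \<in> (\<Inter>l. g l)" and "y \<le> x"
  have "y \<in> g l" for l
  proof -
    have "x \<in> g l" using xI by blast
    then show ?thesis using P[of l] \<open>y \<le> x\<close> pi_down by blast
  qed
  then show "y \<in> (\<Inter>l. g l)" by blast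
next
  fix x y assume xI: "x \<in> (\<Inter>l. g l)" and yI: "y \<in> (\<Inter>l. g l)"
  have "sup x y \<in> g l" for l
  proof -
    have "x \<in> g l" "y \<in> g l" using xI yI by blast+
    then show ?thesis using P[of l] pi_sup by blast
  qed
  then show "sup x y \<in> (\<Inter>l. g l)" by blast
next
  fix x y assume xy: "inf x y \<in> (\<Inter>l. g l)"
  show "x \<in> (\<Inter>l. g l) \<or> y \<in> (\<Inter>l. g l)"
  proof (rule ccontr)
    assume "\<not> ?thesis"
    then obtain i j where xi: "x \<notin> g i" and yj: "y \<notin> g j" by blast
    have "g (max i j) \<subseteq> g i" "g (max i j) \<subseteq> g j" using M by simp_all
    then have "x \<notin> g (max i j)" "y \<notin> g (max i j)" using xi yj by blast+
    moreover have "inf x y \<in> g (max i j)" using xy by blast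
    ultimately show False using P[of "max i j"] pi_prime pi_sup by blast
  qed
qed

lemma inc_chain_prime:
  fixes g :: "nat \<Rightarrow> 'l::{bounded_lattice,distrib_lattice} set"
  assumes P: "\<And>l. prime_ideal (g l)" and M: "\<And>i j. i \<le> j \<Longrightarrow> g i \<subseteq> g j"
  shows "prime_ideal (\<Union>l. g l)"
  unfolding prime_ideal_def
proof (intro conjI allI impI)
  have "bot \<in> g 0" using P pi_bot by blast
  then show "bot \<in> (\<Union>l. g l)" by blast
  have "top \<notin> g l" for l using prime_top P by blast
  then show "(\<Union>l. g l) \<noteq> UNIV" by blast
next
  fix x y assume "x \<in> (\<Union>l. g l)" and "y \<le> x"
  then obtain l where "x \<in> g l" by blast
  then have "y \<in> g l" using P[of l] \<open>y \<le> x\<close> pi_down by blast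
  then show "y \<in> (\<Union>l. g l)" by blast
next
  fix x y assume "x \<in> (\<Union>l. g l)" "y \<in> (\<Union>l. g l)"
  then obtain i j where xi: "x \<in> g i" and yj: "y \<in> g j" by blast
  have "g i \<subseteq> g (max i j)" "g j \<subseteq> g (max i j)" using M by simp_all
  then have "x \<in> g (max i j)" "y \<in> g (max i j)" using xi yj by blast+
  then have "sup x y \<in> g (max i j)" using P[of "max i j"] pi_prime pi_sup by blast
  then show "sup x y \<in> (\<Union>l. g l)" by blast
next
  fix x y assume xy: "inf x y \<in> (\<Union>l. g l)"
  then obtain i where "inf x y \<in> g i" by blast
  then have "x \<in> g i \<or> y \<in> g i" using P[of i] pi_prime by blast
  then show "x \<in> (\<Union>l. g l) \<or> y \<in> (\<Union>l. g l)" by blast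
qed

lemma gen_le: "P_gen x y \<Longrightarrow> P_le x y"
  unfolding P_le_def by auto

lemma le_trans: "P_le x y \<Longrightarrow> P_le y z \<Longrightarrow> P_le x z"
  unfolding P_le_def by auto

lemma le_refl: "P_le x x"
  unfolding P_le_def by auto

lemma chain_dec: assumes "\<And>i. P_le (g (Suc i)) (g i)" "(i::nat) \<le> j" shows "P_le (g j) (g i)"
  using assms(2)
proof (induction j rule: dec_induct)
  case base then show ?case by (rule le_refl)
next
  case (step n) then show ?case using le_trans assms(1) by blast
qed

lemma chain_inc: assumes "\<And>i. P_le (g i) (g (Suc i))" "(i::nat) \<le> j" shows "P_le (g i) (g j)"
  using assms(2)
proof (induction j rule: dec_induct)
  case base then show ?case by (rule le_refl)
next
  case (step n) then show ?case using le_trans assms(1) by blast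
qed

lemma gen0a: "P_gen [] [Suc l]" unfolding P_gen_def
  apply (rule disjI1) apply (rule exI[of _ "Suc l"], rule exI[of _ l]) by simp
lemma gen0b: "P_gen [Suc l] [l]" unfolding P_gen_def
  apply (rule disjI1) apply (rule exI[of _ "Suc l"], rule exI[of _ l]) by simp

lemma genE1: "odd (length t) \<Longrightarrow> P_gen (t @ [l]) (t @ [Suc l])"
  unfolding P_gen_def
  apply (rule disjI2, rule disjI1)
  apply (rule exI[of _ t], rule exI[of _ l], rule exI[of _ "Suc l"], rule exI[of _ "last t"])
  by simp

lemma genE2: "odd (length t) \<Longrightarrow> k \<le> last t \<Longrightarrow> P_gen (t @ [Suc l]) (butlast t @ [k])"
  unfolding P_gen_def
  apply (rule disjI2, rule disjI1)
  apply (rule exI[of _ t], rule exI[of _ l], rule exI[of _ "Suc l"], rule exI[of _ k])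
  by simp

lemma genO1: "even (length t) \<Longrightarrow> t \<noteq> [] \<Longrightarrow> k \<le> last t \<Longrightarrow> P_gen (butlast t @ [k]) (t @ [Suc l])"
  unfolding P_gen_def
  apply (rule disjI2, rule disjI2)
  apply (rule exI[of _ t], rule exI[of _ "Suc l"], rule exI[of _ l], rule exI[of _ k])
  by simp

lemma genO2: "even (length t) \<Longrightarrow> t \<noteq> [] \<Longrightarrow> P_gen (t @ [Suc l]) (t @ [l])"
  unfolding P_gen_def
  apply (rule disjI2, rule disjI2)
  apply (rule exI[of _ t], rule exI[of _ "Suc l"], rule exI[of _ l], rule exI[of _ "last t"])
  by simp

lemma even_sib: assumes "even (length x)" "i \<le> j" shows "P_le (x @ [j]) (x @ [i])"
proof (rule chain_dec[of "\<lambda>i. x @ [i]", OF _ assms(2)])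
  fix i show "P_le (x @ [Suc i]) (x @ [i])"
  proof (cases "x = []")
    case True then show ?thesis using gen0b gen_le by simp
  next
    case False then show ?thesis using genO2 gen_le assms(1) by blast
  qed
qed

lemma odd_sib: assumes "odd (length x)" "i \<le> j" shows "P_le (x @ [i]) (x @ [j])"
  by (rule chain_inc[of "\<lambda>i. x @ [i]", OF _ assms(2)]) (use genE1 gen_le assms(1) in blast)

lemma even_child: assumes "even (length x)" shows "P_le x (x @ [l])"
proof -
  have "P_le x (x @ [Suc l])"
  proof (cases "x = []")
    case True then show ?thesis using gen0a gen_le by simp
  next
    case False
    then have "P_gen (butlast x @ [last x]) (x @ [Suc l])" using genO1 assms by blast
    then show ?thesis using False gen_le by simp
  qed
  moreover have "P_le (x @ [Suc l]) (x @ [l])" using even_sib assms by simp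
  ultimately show ?thesis using le_trans by blast
qed

lemma odd_child: assumes "odd (length x)" shows "P_le (x @ [l]) x"
proof -
  have "x \<noteq> []" using assms by auto
  have "P_gen (x @ [Suc l]) (butlast x @ [last x])" using genE2 assms by blast
  then have "P_le (x @ [Suc l]) x" using \<open>x \<noteq> []\<close> gen_le by simp
  moreover have "P_le (x @ [l]) (x @ [Suc l])" using odd_sib assms by simp
  ultimately show ?thesis using le_trans by blast
qed

lemma odd_up_sib: assumes "odd (length s)" "k \<le> last s" shows "P_le s (butlast s @ [k])"
proof -
  have "s \<noteq> []" using assms by auto
  then have s: "s = butlast s @ [last s]" by simp
  have "even (length (butlast s))" using assms by simp
  then have "P_le (butlast s @ [last s]) (butlast s @ [k])" using even_sib assms(2) by blast
  then show ?thesis using s by metis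
qed

lemma even_down_sib: assumes "even (length x)" "x \<noteq> []" "k \<le> last x" shows "P_le (butlast x @ [k]) x"
proof -
  have s: "x = butlast x @ [last x]" using assms by simp
  have "odd (length (butlast x))" using assms by (cases x) auto
  then have "P_le (butlast x @ [k]) (butlast x @ [last x])" using odd_sib assms(3) by blast
  then show ?thesis using s by metis
qed

lemma P_gen_cases:
  assumes g: "P_gen z z'"
  obtains
      (Z) i j' where "j' < i" "(z = [] \<and> z' = [i]) \<or> (z = [i] \<and> z' = [j'])"
    | (E) t i j' k where "odd (length t)" "k \<le> last t" "i < j'"
        "(z = t @ [i] \<and> z' = t @ [j']) \<or> (z = t @ [j'] \<and> z' = butlast t @ [k])"
    | (O) t i j' k where "even (length t)" "t \<noteq> []" "k \<le> last t" "j' < i"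
        "(z = butlast t @ [k] \<and> z' = t @ [i]) \<or> (z = t @ [i] \<and> z' = t @ [j'])"
proof -
  from g have "(\<exists>i j. j < i \<and> ((z = [] \<and> z' = [i]) \<or> (z = [i] \<and> z' = [j])))
   \<or> (\<exists>s i j k. odd (length s) \<and> k \<le> last s \<and> i < j \<and>
        ((z = s @ [i] \<and> z' = s @ [j]) \<or> (z = s @ [j] \<and> z' = butlast s @ [k])))
   \<or> (\<exists>s i j k. even (length s) \<and> s \<noteq> [] \<and> k \<le> last s \<and> j < i \<and>
        ((z = butlast s @ [k] \<and> z' = s @ [i]) \<or> (z = s @ [i] \<and> z' = s @ [j])))"
    unfolding P_gen_def .
  then show thesis
  proof (elim disjE)
    assume "\<exists>i j. j < i \<and> ((z = [] \<and> z' = [i]) \<or> (z = [i] \<and> z' = [j]))"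
    then obtain i j where "j < i" "(z = [] \<and> z' = [i]) \<or> (z = [i] \<and> z' = [j])"
      by (elim exE conjE)
    then show thesis by (rule Z)
  next
    assume "\<exists>s i j k. odd (length s) \<and> k \<le> last s \<and> i < j \<and>
        ((z = s @ [i] \<and> z' = s @ [j]) \<or> (z = s @ [j] \<and> z' = butlast s @ [k]))"
    then obtain s i j k where "odd (length s)" "k \<le> last s" "i < j"
        "(z = s @ [i] \<and> z' = s @ [j]) \<or> (z = s @ [j] \<and> z' = butlast s @ [k])"
      by (elim exE conjE)
    then show thesis by (rule E)
  next
    assume "\<exists>s i j k. even (length s) \<and> s \<noteq> [] \<and> k \<le> last s \<and> j < i \<and>
        ((z = butlast s @ [k] \<and> z' = s @ [i]) \<or> (z = s @ [i] \<and> z' = s @ [j]))"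
    then obtain s i j k where "even (length s)" "s \<noteq> []" "k \<le> last s" "j < i"
        "(z = butlast s @ [k] \<and> z' = s @ [i]) \<or> (z = s @ [i] \<and> z' = s @ [j])"
      by (elim exE conjE)
    then show thesis by (rule O)
  qed
qed

lemma snoc_eq: "s @ m # w' @ [e] = t @ [i] \<longleftrightarrow> (t = s @ m # w' \<and> e = i)"
  by (metis append1_eq_conv append_Cons append_assoc)

definition UpW :: "nat list \<Rightarrow> nat \<Rightarrow> nat list \<Rightarrow> bool" where
  "UpW s j z \<longleftrightarrow> P_le s z \<or> (\<exists>m w. j \<le> m \<and> z = s @ m # w)"

definition DnW :: "nat list \<Rightarrow> nat \<Rightarrow> nat list \<Rightarrow> bool" where
  "DnW x j z \<longleftrightarrow> P_le z x \<or> (\<exists>m w. j \<le> m \<and> z = x @ m # w)"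

lemma up_step:
  assumes s: "odd (length s)" and g: "P_gen z z'" and u: "UpW s j z"
  shows "UpW s j z'"
proof (cases "P_le s z")
  case True
  then show ?thesis using g gen_le le_trans unfolding UpW_def by blast
next
  case False
  then obtain m w where jm: "j \<le> m" and z: "z = s @ m # w" using u unfolding UpW_def by blast
  have lz: "length z \<ge> 2" using z s by (cases s) auto
  from g show ?thesis
  proof (cases rule: P_gen_cases)
    case (Z i j') then show ?thesis using lz by auto
  next
    case (E t i j' k)
    show ?thesis
    proof (cases w rule: rev_cases)
      case Nil
      then have zz: "z = s @ [m]" using z by simp
      from E(4) show ?thesis
      proof
        assume a: "z = t @ [i] \<and> z' = t @ [j']"
        then have "t = s" "i = m" using zz by auto
        then show ?thesis using a E(3) jm unfolding UpW_def by auto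
      next
        assume a: "z = t @ [j'] \<and> z' = butlast t @ [k]"
        then have "t = s" using zz by auto
        then show ?thesis using a E(2) s odd_up_sib unfolding UpW_def by auto
      qed
    next
      case (snoc w' e)
      then have zz: "z = s @ m # w' @ [e]" using z by simp
      from E(4) show ?thesis
      proof
        assume a: "z = t @ [i] \<and> z' = t @ [j']"
        then have "t = s @ m # w'" using zz snoc_eq by metis
        then show ?thesis using a jm unfolding UpW_def by auto
      next
        assume a: "z = t @ [j'] \<and> z' = butlast t @ [k]"
        then have t: "t = s @ m # w'" using zz snoc_eq by metis
        then have "w' \<noteq> []" using E(1) s by auto
        then have "butlast t = s @ m # butlast w'" using t by (simp add: butlast_append)
        then show ?thesis using a jm unfolding UpW_def by auto
      qed
    qed
  next
    case (O t i j' k)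
    show ?thesis
    proof (cases w rule: rev_cases)
      case Nil
      then have zz: "z = s @ [m]" using z by simp
      from O(5) show ?thesis
      proof
        assume a: "z = butlast t @ [k] \<and> z' = t @ [i]"
        then have bt: "butlast t = s" "k = m" using zz by auto
        have "t = butlast t @ [last t]" using O(2) by simp
        then have "z' = s @ last t # [i]" using a bt by simp
        moreover have "j \<le> last t" using O(3) bt jm by simp
        ultimately show ?thesis unfolding UpW_def by blast
      next
        assume a: "z = t @ [i] \<and> z' = t @ [j']"
        then have "t = s" using zz by auto
        then show ?thesis using O(1) s by simp
      qed
    next
      case (snoc w' e)
      then have zz: "z = s @ m # w' @ [e]" using z by simp
      from O(5) show ?thesis
      proof
        assume a: "z = butlast t @ [k] \<and> z' = t @ [i]"
        then have bt: "butlast t = s @ m # w'" using zz snoc_eq by metis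
        have "t = butlast t @ [last t]" using O(2) by simp
        then have "z' = s @ m # (w' @ [last t, i])" using a bt by simp
        then show ?thesis using jm unfolding UpW_def by blast
      next
        assume a: "z = t @ [i] \<and> z' = t @ [j']"
        then have "t = s @ m # w'" using zz snoc_eq by metis
        then show ?thesis using a jm unfolding UpW_def by auto
      qed
    qed
  qed
qed

lemma dn_step:
  assumes x: "even (length x)" and g: "P_gen z' z" and u: "DnW x j z"
  shows "DnW x j z'"
proof (cases "P_le z x")
  case True
  then show ?thesis using g gen_le le_trans unfolding DnW_def by blast
next
  case False
  then obtain m w where jm: "j \<le> m" and z: "z = x @ m # w" using u unfolding DnW_def by blast
  from g show ?thesis
  proof (cases rule: P_gen_cases)
    case (Z i j')
    from Z(2) show ?thesis
    proof
      assume a: "z' = [] \<and> z = [i]"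
      then have "x = []" using z by (cases x) auto
      then show ?thesis using a le_refl unfolding DnW_def by auto
    next
      assume a: "z' = [i] \<and> z = [j']"
      then have "x = []" "w = []" "m = j'" using z by (cases x; auto)+
      then show ?thesis using a Z(1) jm unfolding DnW_def by auto
    qed
  next
    case (E t i j' k)
    show ?thesis
    proof (cases w rule: rev_cases)
      case Nil
      then have zz: "z = x @ [m]" using z by simp
      from E(4) show ?thesis
      proof
        assume a: "z' = t @ [i] \<and> z = t @ [j']"
        then have "t = x" using zz by auto
        then show ?thesis using E(1) x by simp
      next
        assume a: "z' = t @ [j'] \<and> z = butlast t @ [k]"
        then have bt: "butlast t = x" "k = m" using zz by auto
        have "t \<noteq> []" using E(1) by auto
        then have "t = butlast t @ [last t]" by simp
        then have "z' = x @ last t # [j']" using a bt by simp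
        moreover have "j \<le> last t" using E(2) bt jm by simp
        ultimately show ?thesis unfolding DnW_def by blast
      qed
    next
      case (snoc w' e)
      then have zz: "z = x @ m # w' @ [e]" using z by simp
      from E(4) show ?thesis
      proof
        assume a: "z' = t @ [i] \<and> z = t @ [j']"
        then have "t = x @ m # w'" using zz snoc_eq by metis
        then show ?thesis using a jm unfolding DnW_def by auto
      next
        assume a: "z' = t @ [j'] \<and> z = butlast t @ [k]"
        have "t \<noteq> []" using E(1) by auto
        then have tt: "t = butlast t @ [last t]" by simp
        have bt: "butlast t = x @ m # w'" using a zz snoc_eq by metis
        then have "z' = x @ m # (w' @ [last t, j'])" using a tt by (metis append.assoc append_Cons append_Nil)
        then show ?thesis using jm unfolding DnW_def by blast
      qed
    qed
  next
    case (O t i j' k)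
    show ?thesis
    proof (cases w rule: rev_cases)
      case Nil
      then have zz: "z = x @ [m]" using z by simp
      from O(5) show ?thesis
      proof
        assume a: "z' = butlast t @ [k] \<and> z = t @ [i]"
        then have "t = x" using zz by auto
        then show ?thesis using a O(2) O(3) x even_down_sib unfolding DnW_def by auto
      next
        assume a: "z' = t @ [i] \<and> z = t @ [j']"
        then have "t = x" "m = j'" using zz by auto
        then show ?thesis using a O(4) jm unfolding DnW_def by auto
      qed
    next
      case (snoc w' e)
      then have zz: "z = x @ m # w' @ [e]" using z by simp
      from O(5) show ?thesis
      proof
        assume a: "z' = butlast t @ [k] \<and> z = t @ [i]"
        then have t: "t = x @ m # w'" using zz snoc_eq by metis
        then have "w' \<noteq> []" using O(1) x by auto
        then have "butlast t = x @ m # butlast w'" using t by (simp add: butlast_append)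
        then show ?thesis using a jm unfolding DnW_def by auto
      next
        assume a: "z' = t @ [i] \<and> z = t @ [j']"
        then have "t = x @ m # w'" using zz snoc_eq by metis
        then show ?thesis using a jm unfolding DnW_def by auto
      qed
    qed
  qed
qed

lemma up_closed:
  assumes s: "odd (length s)" and le: "P_le z z'" and u: "UpW s j z"
  shows "UpW s j z'"
  using le[unfolded P_le_def] u
proof (induction rule: rtranclp_induct)
  case base then show ?case .
next
  case (step y z'') then show ?case using up_step s by blast
qed

lemma dn_closed:
  assumes x: "even (length x)" and le: "P_le z' z" and u: "DnW x j z"
  shows "DnW x j z'"
  using le[unfolded P_le_def] u
proof (induction rule: converse_rtranclp_induct)
  case base then show ?case .
next
  case (step y z'') then show ?case using dn_step x by blast
qed

lemma odd_ub:
  assumes s: "odd (length s)" and ub: "\<And>l. P_le (s @ [l]) z"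
  shows "P_le s z"
proof -
  define j where "j = Suc (z ! length s)"
  have "UpW s j (s @ [j])" unfolding UpW_def by blast
  then have "UpW s j z" using up_closed s ub by blast
  moreover have "\<not> (\<exists>m w. j \<le> m \<and> z = s @ m # w)"
  proof
    assume "\<exists>m w. j \<le> m \<and> z = s @ m # w"
    then obtain m w where "j \<le> m" "z = s @ m # w" by blast
    then show False unfolding j_def by simp
  qed
  ultimately show ?thesis unfolding UpW_def by blast
qed

lemma even_lb:
  assumes x: "even (length x)" and lb: "\<And>l. P_le z (x @ [l])"
  shows "P_le z x"
proof -
  define j where "j = Suc (z ! length x)"
  have "DnW x j (x @ [j])" unfolding DnW_def by blast
  then have "DnW x j z" using dn_closed x lb by blast
  moreover have "\<not> (\<exists>m w. j \<le> m \<and> z = x @ m # w)"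
  proof
    assume "\<exists>m w. j \<le> m \<and> z = x @ m # w"
    then obtain m w where "j \<le> m" "z = x @ m # w" by blast
    then show False unfolding j_def by simp
  qed
  ultimately show ?thesis unfolding DnW_def by blast
qed

lemma iso_facts:
  fixes f :: "nat list \<Rightarrow> 'l::{bounded_lattice,distrib_lattice} set"
  assumes iso: "iso_to_spectrum UNIV P_le f"
  shows "\<And>x y. P_le x y \<longleftrightarrow> f x \<subseteq> f y"
    and "\<And>x. prime_ideal (f x)"
    and "\<And>I. prime_ideal I \<Longrightarrow> \<exists>z. I = f z"
    and "inj f"
proof -
  have b: "bij_betw f UNIV {I. prime_ideal I}" and o: "\<forall>x\<in>UNIV. \<forall>y\<in>UNIV. P_le x y \<longleftrightarrow> f x \<subseteq> f y"
    using iso unfolding iso_to_spectrum_def by simp_all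
  show "\<And>x y. P_le x y \<longleftrightarrow> f x \<subseteq> f y" using o by simp
  have im: "f ` UNIV = {I. prime_ideal I}" using b by (simp add: bij_betw_def)
  show "\<And>x. prime_ideal (f x)"
  proof -
    fix x have "f x \<in> f ` UNIV" by (rule imageI) simp
    then show "prime_ideal (f x)" using im by simp
  qed
  show "\<And>I. prime_ideal I \<Longrightarrow> \<exists>z. I = f z"
  proof -
    fix I :: "'l set" assume "prime_ideal I"
    then have "I \<in> f ` UNIV" using im by simp
    then show "\<exists>z. I = f z" by (auto simp: image_iff)
  qed
  show "inj f" using b by (simp add: bij_betw_def)
qed

lemma agree:
  fixes f :: "nat list \<Rightarrow> 'l::{bounded_lattice,distrib_lattice} set"
  assumes iso: "iso_to_spectrum UNIV P_le f"
  shows "\<exists>N. \<forall>l\<ge>N. (a \<in> f (x @ [l]) \<longleftrightarrow> a \<in> f x)"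
proof -
  note ord = iso_facts(1)[OF iso] and pr = iso_facts(2)[OF iso] and sur = iso_facts(3)[OF iso]
  show ?thesis
  proof (cases "even (length x)")
    case ev: True
    have up: "f x \<subseteq> f (x @ [l])" for l using even_child ev ord by blast
    have dec: "f (x @ [j]) \<subseteq> f (x @ [i])" if "i \<le> j" for i j using even_sib[OF ev that] ord by blast
    show ?thesis
    proof (cases "a \<in> f x")
      case True then show ?thesis using up by blast
    next
      case False
      have "\<exists>l. a \<notin> f (x @ [l])"
      proof (rule ccontr)
        assume "\<not> (\<exists>l. a \<notin> f (x @ [l]))"
        then have all: "\<forall>l. a \<in> f (x @ [l])" by blast
        have "prime_ideal (\<Inter>l. f (x @ [l]))"
          by (rule dec_chain_prime) (use pr dec in auto)
        then obtain z where z: "(\<Inter>l. f (x @ [l])) = f z" using sur by blast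
        have "P_le z (x @ [l])" for l
        proof -
          have "f z \<subseteq> f (x @ [l])" using z by blast
          then show ?thesis using ord by blast
        qed
        then have "P_le z x" using even_lb ev by blast
        then have "f z \<subseteq> f x" using ord by blast
        moreover have "a \<in> f z" using all z by blast
        ultimately show False using False by blast
      qed
      then obtain l where l: "a \<notin> f (x @ [l])" by blast
      have "\<forall>l'\<ge>l. (a \<in> f (x @ [l']) \<longleftrightarrow> a \<in> f x)" using l dec False by blast
      then show ?thesis by blast
    qed
  next
    case od: False
    have down: "f (x @ [l]) \<subseteq> f x" for l using odd_child od ord by blast
    have inc: "f (x @ [i]) \<subseteq> f (x @ [j])" if "i \<le> j" for i j using odd_sib od that ord by blast
    show ?thesis
    proof (cases "a \<in> f x")
      case False then show ?thesis using down by blast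
    next
      case True
      have "\<exists>l. a \<in> f (x @ [l])"
      proof (rule ccontr)
        assume nex: "\<not> (\<exists>l. a \<in> f (x @ [l]))"
        have "prime_ideal (\<Union>l. f (x @ [l]))"
          by (rule inc_chain_prime) (use pr inc in auto)
        then obtain z where z: "(\<Union>l. f (x @ [l])) = f z" using sur by blast
        have "P_le (x @ [l]) z" for l
        proof -
          have "f (x @ [l]) \<subseteq> f z" using z by blast
          then show ?thesis using ord by blast
        qed
        then have "P_le x z" using odd_ub od by blast
        then have "f x \<subseteq> f z" using ord by blast
        then have "a \<in> (\<Union>l. f (x @ [l]))" using True z by blast
        then show False using nex by blast
      qed
      then obtain l where l: "a \<in> f (x @ [l])" by blast
      have "\<forall>l'\<ge>l. (a \<in> f (x @ [l']) \<longleftrightarrow> a \<in> f x)" using l inc True by blast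
      then show ?thesis by blast
    qed
  qed
qed

lemma combine:
  assumes "\<forall>a\<in>set xs. \<exists>N. \<forall>l\<ge>N. P a (l::nat)"
  shows "\<exists>N. \<forall>a\<in>set xs. \<forall>l\<ge>N. P a l"
  using assms
proof (induction xs)
  case Nil then show ?case by simp
next
  case (Cons b xs)
  then obtain N1 where N1: "\<forall>a\<in>set xs. \<forall>l\<ge>N1. P a l" by auto
  obtain N2 where N2: "\<forall>l\<ge>N2. P b l" using Cons.prems by auto
  have "\<forall>a\<in>set (b # xs). \<forall>l\<ge>max N1 N2. P a l" using N1 N2 by auto
  then show ?case by blast
qed

definition sat :: "(nat list \<Rightarrow> 'l set) \<Rightarrow> nat list \<Rightarrow> 'l list \<Rightarrow> 'l list \<Rightarrow> bool" where
  "sat f x A B \<longleftrightarrow> set A \<subseteq> f x \<and> set B \<inter> f x = {}"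

lemma ext:
  fixes f :: "nat list \<Rightarrow> 'l::{bounded_lattice,distrib_lattice} set"
  assumes iso: "iso_to_spectrum UNIV P_le f" and s: "sat f x A B"
  shows "\<exists>y. y \<noteq> q \<and> sat f y A B"
proof -
  have "\<forall>a\<in>set (A @ B). \<exists>N. \<forall>l\<ge>N. (a \<in> f (x @ [l]) \<longleftrightarrow> a \<in> f x)"
    using agree[OF iso] by blast
  then obtain N where N: "\<forall>a\<in>set (A @ B). \<forall>l\<ge>N. (a \<in> f (x @ [l]) \<longleftrightarrow> a \<in> f x)"
    using combine[where P = "\<lambda>a l. (a \<in> f (x @ [l]) \<longleftrightarrow> a \<in> f x)"] by blast
  have sl: "sat f (x @ [l]) A B" if "l \<ge> N" for l
    using s N that unfolding sat_def by auto
  show ?thesis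
  proof (cases "x @ [N] = q")
    case True
    then have "x @ [Suc N] \<noteq> q" by auto
    then show ?thesis using sl[of "Suc N"] by auto
  next
    case False then show ?thesis using sl[of N] by auto
  qed
qed

lemma step_ex:
  fixes f :: "nat list \<Rightarrow> 'l::{bounded_lattice,distrib_lattice} set"
  assumes iso: "iso_to_spectrum UNIV P_le f" and s: "sat f x A B"
  shows "\<exists>y A' B'. sat f y A' B' \<and> set A \<subseteq> set A' \<and> set B \<subseteq> set B' \<and> \<not> sat f q A' B'"
proof -
  obtain y where y: "y \<noteq> q" "sat f y A B" using ext[OF iso s] by blast
  have "f y \<noteq> f q" using y(1) iso_facts(4)[OF iso] by (simp add: inj_eq)
  show ?thesis
  proof (cases "f y \<subseteq> f q")
    case True
    then obtain c where c: "c \<in> f q" "c \<notin> f y" using \<open>f y \<noteq> f q\<close> by blast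
    have "sat f y A (c # B)" using y(2) c unfolding sat_def by auto
    moreover have "\<not> sat f q A (c # B)" using c unfolding sat_def by auto
    ultimately show ?thesis by (metis order_refl set_subset_Cons)
  next
    case False
    then obtain c where c: "c \<in> f y" "c \<notin> f q" by blast
    have "sat f y (c # A) B" using y(2) c unfolding sat_def by auto
    moreover have "\<not> sat f q (c # A) B" using c unfolding sat_def by auto
    ultimately show ?thesis by (metis order_refl set_subset_Cons)
  qed
qed

theorem lemma2p6:
  fixes f :: "nat list \<Rightarrow> 'l::{bounded_lattice,distrib_lattice} set"
  shows "\<not> iso_to_spectrum UNIV P_le f"
proof
  assume iso: "iso_to_spectrum UNIV P_le f"
  note pr = iso_facts(2)[OF iso] and sur = iso_facts(3)[OF iso]
  define Q where "Q st q st' \<longleftrightarrow> sat f (fst st') (fst (snd st')) (snd (snd st')) \<and>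
      set (fst (snd st)) \<subseteq> set (fst (snd st')) \<and> set (snd (snd st)) \<subseteq> set (snd (snd st')) \<and>
      \<not> sat f q (fst (snd st')) (snd (snd st'))"
    for st st' :: "nat list \<times> 'l list \<times> 'l list" and q :: "nat list"
  define nx where "nx st q = (SOME st'. Q st q st')" for st q
  define sq where "sq = rec_nat ([], [], []) (\<lambda>n st. nx st (from_nat n))"
  have sq0: "sq 0 = ([], [], [])" and sqS: "sq (Suc n) = nx (sq n) (from_nat n)" for n
    by (simp_all add: sq_def)
  have Qex: "Q st q (nx st q)" if "sat f (fst st) (fst (snd st)) (snd (snd st))" for st q
  proof -
    obtain x A B where st: "st = (x, A, B)" by (cases st) auto
    then have "sat f x A B" using that by simp
    then obtain y A' B' where "sat f y A' B' \<and> set A \<subseteq> set A' \<and> set B \<subseteq> set B' \<and> \<not> sat f q A' B'"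
      using step_ex[OF iso] by blast
    then have "Q st q (y, A', B')" unfolding Q_def st by simp
    then show ?thesis unfolding nx_def by (rule someI)
  qed
  have satn: "sat f (fst (sq n)) (fst (snd (sq n))) (snd (snd (sq n)))" for n
  proof (induction n)
    case 0 then show ?case by (simp add: sq0 sat_def)
  next
    case (Suc n) then show ?case using Qex[of "sq n" "from_nat n"] sqS unfolding Q_def by simp
  qed
  have Qn: "Q (sq n) (from_nat n) (sq (Suc n))" for n using Qex satn sqS by simp
  define X where "X n = fst (sq n)" for n
  define AL where "AL n = set (fst (snd (sq n)))" for n
  define BL where "BL n = set (snd (snd (sq n)))" for n
  have satX: "AL n \<subseteq> f (X n)" "BL n \<inter> f (X n) = {}" for n
    using satn[of n] unfolding sat_def AL_def BL_def X_def by auto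
  have monoA: "AL n \<subseteq> AL m" if "n \<le> m" for n m
    by (rule lift_Suc_mono_le[of AL, OF _ that]) (use Qn in \<open>simp add: Q_def AL_def\<close>)
  have monoB: "BL n \<subseteq> BL m" if "n \<le> m" for n m
    by (rule lift_Suc_mono_le[of BL, OF _ that]) (use Qn in \<open>simp add: Q_def BL_def\<close>)
  define J where "J = {c. \<exists>n. \<forall>m\<ge>n. c \<in> f (X m)}"
  define F where "F = {c. \<exists>n. \<forall>m\<ge>n. c \<notin> f (X m)}"
  have "is_ideal J" unfolding is_ideal_def
  proof (intro conjI allI impI)
    show "bot \<in> J" unfolding J_def using pr pi_bot by blast
  next
    fix x y assume "x \<in> J" "y \<le> x"
    then obtain n where "\<forall>m\<ge>n. x \<in> f (X m)" unfolding J_def by blast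
    then have "\<forall>m\<ge>n. y \<in> f (X m)" using pr pi_down \<open>y \<le> x\<close> by blast
    then show "y \<in> J" unfolding J_def by blast
  next
    fix x y assume "x \<in> J" "y \<in> J"
    then obtain n1 n2 where "\<forall>m\<ge>n1. x \<in> f (X m)" "\<forall>m\<ge>n2. y \<in> f (X m)" unfolding J_def by blast
    then have "\<forall>m\<ge>max n1 n2. sup x y \<in> f (X m)" using pr pi_sup by (metis max.boundedE)
    then show "sup x y \<in> J" unfolding J_def by blast
  qed
  moreover have "top \<in> F" unfolding F_def using pr prime_top by blast
  moreover have "\<forall>x y. x \<in> F \<longrightarrow> x \<le> y \<longrightarrow> y \<in> F"
  proof (intro allI impI)
    fix x y assume "x \<in> F" "x \<le> y"
    then obtain n where "\<forall>m\<ge>n. x \<notin> f (X m)" unfolding F_def by blast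
    then have "\<forall>m\<ge>n. y \<notin> f (X m)" using pr pi_down \<open>x \<le> y\<close> by blast
    then show "y \<in> F" unfolding F_def by blast
  qed
  moreover have "\<forall>x y. x \<in> F \<longrightarrow> y \<in> F \<longrightarrow> inf x y \<in> F"
  proof (intro allI impI)
    fix x y assume "x \<in> F" "y \<in> F"
    then obtain n1 n2 where "\<forall>m\<ge>n1. x \<notin> f (X m)" "\<forall>m\<ge>n2. y \<notin> f (X m)" unfolding F_def by blast
    then have "\<forall>m\<ge>max n1 n2. inf x y \<notin> f (X m)" using pr pi_prime by (metis max.boundedE)
    then show "inf x y \<in> F" unfolding F_def by blast
  qed
  moreover have "J \<inter> F = {}"
  proof (rule ccontr)
    assume "J \<inter> F \<noteq> {}"
    then obtain c n1 n2 where "\<forall>m\<ge>n1. c \<in> f (X m)" "\<forall>m\<ge>n2. c \<notin> f (X m)" unfolding J_def F_def by blast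
    then show False by (metis max.cobounded1 max.cobounded2)
  qed
  ultimately obtain I where I: "prime_ideal I" "J \<subseteq> I" "I \<inter> F = {}" using bpi by blast
  obtain q where q: "I = f q" using sur I(1) by blast
  define n where "n = to_nat q"
  have "from_nat n = q" unfolding n_def by simp
  then have ns: "\<not> sat f q (fst (snd (sq (Suc n)))) (snd (snd (sq (Suc n))))"
    using Qn[of n] unfolding Q_def by simp
  then have "\<not> (AL (Suc n) \<subseteq> f q) \<or> BL (Suc n) \<inter> f q \<noteq> {}"
    unfolding sat_def AL_def BL_def by blast
  then show False
  proof
    assume "\<not> (AL (Suc n) \<subseteq> f q)"
    then obtain a where a: "a \<in> AL (Suc n)" "a \<notin> f q" by blast
    have "\<forall>m\<ge>Suc n. a \<in> f (X m)" using a(1) monoA satX(1) by blast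
    then have "a \<in> J" unfolding J_def by blast
    then show False using I(2) q a(2) by blast
  next
    assume "BL (Suc n) \<inter> f q \<noteq> {}"
    then obtain b where b: "b \<in> BL (Suc n)" "b \<in> f q" by blast
    have "\<forall>m\<ge>Suc n. b \<notin> f (X m)" using b(1) monoB satX(2) by blast
    then have "b \<in> F" unfolding F_def by blast
    then show False using I(3) q b(2) by blast
  qed
qed

end
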